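(* Let $k\ge 2$ and let $\mathcal{C}$ be the full flag code on $\mathbb{F}_q^{2k}$ constructed from a $k$-spread as described in the context. Let $\mathcal{F}=(\mathcal{F}_1,\ldots,\mathcal{F}_{2k-1})\in\mathcal{C}$ and let $\mathcal{X}=(\mathcal{X}_1,\ldots,\mathcal{X}_{2k-1})$ be a sequence of subspaces with $\mathcal{X}_i\subseteq\mathcal{F}_i$ for all $i$ and $\mathcal{X}_1=\cdots=\mathcal{X}_k=\{0\}$. If $\sum_{i=1}^{2k-1}d_S(\mathcal{F}_i,\mathcal{X}_i)\le k^2-1$, then there exists an index $i$ with $k<i<2k$ such that $\dim\mathcal{X}_i>2(i-k)$.
   Context: $q$ is a prime power; $d_S(\mathcal{U},\mathcal{V})=\dim(\mathcal{U}+\mathcal{V})-\dim(\mathcal{U}\cap\mathcal{V})$. Construction: let $\{\mathcal{S}_1,\ldots,\mathcal{S}_{q^k+1}\}$ be a $k$-spread of $\mathbb{F}_q^{2k}$ (a set of $q^k+1$ $k$-dimensional subspaces pairwise intersecting trivially), with full-rank $k\times 2k$ generator matrices $\mathrm{S}_i$. Let $\mathrm{W}_i=\begin{pmatrix}\mathrm{S}_i\\ \mathrm{S}_{i+1}\end{pmatrix}$ for $i\le q^k$ and $\mathrm{W}_{q^k+1}=\begin{pmatrix}\mathrm{S}_{q^k+1}\\ \mathrm{S}_1\end{pmatrix}$, let $\mathcal{W}_i^{(j)}$ be the row space of the first $j$ rows of $\mathrm{W}_i$, and $\mathcal{C}=\{(\mathcal{W}_i^{(1)},\ldots,\mathcal{W}_i^{(2k-1)}):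 1\le i\le q^k+1\}$. *)

theory Defs
  imports Complex_Main "HOL-Library.Function_Algebras"
begin

text \<open>Vectors of F_q^n are modelled as functions nat => 'a (coordinates 0..n-1,
  zero elsewhere); scalar multiplication is pointwise.\<close>

definition fscale :: "'a::field \<Rightarrow> (nat \<Rightarrow> 'a) \<Rightarrow> (nat \<Rightarrow> 'a)" where
  "fscale c v = (\<lambda>i. c * v i)"

interpretation fvs: vector_space "fscale :: 'a::field \<Rightarrow> _"
  by unfold_locales (auto simp: fscale_def fun_eq_iff algebra_simps)

definition ambient :: "nat \<Rightarrow> (nat \<Rightarrow> 'a::field) set" where
  "ambient n = {v. \<forall>i\<ge>n. v i = 0}"

definition fdim :: "(nat \<Rightarrow> 'a::field) set \<Rightarrow> nat" where
  "fdim U = vector_space.dim fscale U"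

definition fspan :: "(nat \<Rightarrow> 'a::field) set \<Rightarrow> (nat \<Rightarrow> 'a) set" where
  "fspan A = module.span fscale A"

definition fsubspace :: "(nat \<Rightarrow> 'a::field) set \<Rightarrow> bool" where
  "fsubspace U = module.subspace fscale U"

definition subspace_dist :: "(nat \<Rightarrow> 'a::field) set \<Rightarrow> (nat \<Rightarrow> 'a) set \<Rightarrow> nat" where
  "subspace_dist U V = fdim (fspan (U \<union> V)) - fdim (U \<inter> V)"

definition rowspace_prefix :: "(nat \<Rightarrow> nat \<Rightarrow> 'a::field) \<Rightarrow> nat \<Rightarrow> (nat \<Rightarrow> 'a) set" where
  "rowspace_prefix M j = fspan {M r | r. r < j}"

definition is_spread_gen :: "nat \<Rightarrow> (nat \<Rightarrow> nat \<Rightarrow> nat \<Rightarrow> 'a::{finite,field}) \<Rightarrow> bool" where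
  "is_spread_gen k S \<longleftrightarrow>
     (\<forall>i\<in>{1..card (UNIV :: 'a set)^k+1}. (\<forall>r<k. S i r \<in> ambient (2*k))
          \<and> fdim (rowspace_prefix (S i) k) = k) \<and>
     (\<forall>i\<in>{1..card (UNIV :: 'a set)^k+1}. \<forall>j\<in>{1..card (UNIV :: 'a set)^k+1}. i \<noteq> j \<longrightarrow>
          rowspace_prefix (S i) k \<inter> rowspace_prefix (S j) k = {0})"

definition Wmat :: "nat \<Rightarrow> (nat \<Rightarrow> nat \<Rightarrow> nat \<Rightarrow> 'a::{finite,field}) \<Rightarrow> nat \<Rightarrow> nat \<Rightarrow> nat \<Rightarrow> 'a" where
  "Wmat k S i r = (if r < k then S i r
                   else S (if i = card (UNIV :: 'a set)^k + 1 then 1 else i + 1) (r - k))"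

text \<open>The flag code: flags are lists [W_i^(1), ..., W_i^(2k-1)] (entry j-1 is W_i^(j)).\<close>
definition spread_flag_code :: "nat \<Rightarrow> (nat \<Rightarrow> nat \<Rightarrow> nat \<Rightarrow> 'a::{finite,field}) \<Rightarrow> (nat \<Rightarrow> 'a) set list set" where
  "spread_flag_code k S =
     {map (\<lambda>j. rowspace_prefix (Wmat k S i) j) [1..<2*k] | i. i \<in> {1..card (UNIV :: 'a set)^k+1}}"

end

theory Submission
  imports Defs
begin

lemma arith_sum:
  fixes k :: nat assumes "k \<ge> 1"
  shows "(\<Sum>j=1..2*k-1. j - (if j \<le> k then 0 else 2*(j-k))) = k^2"
proof -
  have split: "{1..2*k-1} = {1..k} \<union> {k+1..2*k-1}" using assms by auto
  have "(\<Sum>j=1..2*k-1. j - (if j \<le> k then 0 else 2*(j-k))) =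
     (\<Sum>j=1..k. j - (if j \<le> k then 0 else 2*(j-k))) + (\<Sum>j=k+1..2*k-1. j - (if j \<le> k then 0 else 2*(j-k)))"
    unfolding split by (rule sum.union_disjoint) auto
  also have "(\<Sum>j=1..k. j - (if j \<le> k then 0 else 2*(j-k))) = (\<Sum>j=1..k. j)" by (rule sum.cong) auto
  also have "(\<Sum>j=k+1..2*k-1. j - (if j \<le> k then 0 else 2*(j-k))) = (\<Sum>j=k+1..2*k-1. 2*k - j)" by (rule sum.cong) auto
  also have "(\<Sum>j=k+1..2*k-1. 2*k - j) = (\<Sum>m=1..k-1. m)"
    by (rule sum.reindex_bij_witness[of _ "\<lambda>m. 2*k - m" "\<lambda>j. 2*k - j"]) auto
  also have "(\<Sum>j=1..k. j) + (\<Sum>m=1..k-1. m) = k^2"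
  proof -
    have a: "2 * (\<Sum>j=1..k. j) = k*(k+1)" using double_gauss_sum_from_Suc_0[of k, where ?'a=nat] by simp
    have b: "2 * (\<Sum>j=1..k-1. j) = (k-1)*k" using double_gauss_sum_from_Suc_0[of "k-1", where ?'a=nat] assms by simp
    have "2*((\<Sum>j=1..k. j) + (\<Sum>m=1..k-1. m)) = 2*k^2" using a b assms
      by (cases k) (auto simp: power2_eq_square algebra_simps)
    then show ?thesis by simp
  qed
  finally show ?thesis .
qed

lemma rowspace_eq: "rowspace_prefix M j = fvs.span (M ` {..<j})"
proof -
  have "{M r | r. r < j} = M ` {..<j}" by auto
  then show ?thesis unfolding rowspace_prefix_def fspan_def by simp
qed

lemma rows_indep:
  fixes M :: "nat \<Rightarrow> nat \<Rightarrow> 'a::field"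
  assumes "fdim (rowspace_prefix M k) = k"
  shows "inj_on M {..<k} \<and> fvs.independent (M ` {..<k})"
proof -
  define A where "A = M ` {..<k}"
  obtain B where B: "B \<subseteq> A" "fvs.independent B" "A \<subseteq> fvs.span B"
    by (rule fvs.maximal_independent_subset[of A])
  have "fvs.dim (fvs.span A) = k" using assms unfolding rowspace_eq fdim_def A_def .
  then have dA: "fvs.dim A = k" by (simp only: fvs.dim_span)
  have cB: "card B = k" using fvs.basis_card_eq_dim[OF B(1) B(3) B(2)] dA by simp
  have fA: "finite A" unfolding A_def by simp
  have cA: "card A \<le> k" unfolding A_def using card_image_le[of "{..<k}" M] by simp
  have "card A \<le> card B" using cA cB by simp
  then have "card B = card A" using card_mono[OF fA B(1)] by (rule le_antisym[rotated])
  then have BA: "B = A" by (rule card_subset_eq[OF fA B(1)])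
  have indA: "fvs.independent A" using B(2) BA by simp
  have "card A = k" using cB BA by simp
  then have "card (M ` {..<k}) = card {..<k}" unfolding A_def by simp
  then have "inj_on M {..<k}" by (rule eq_card_imp_inj_on[rotated]) simp
  then show ?thesis using indA unfolding A_def by simp
qed

lemma row_notin:
  fixes M :: "nat \<Rightarrow> nat \<Rightarrow> 'a::field"
  assumes "inj_on M {..<k}" "fvs.independent (M ` {..<k})" "j < k"
  shows "M j \<notin> fvs.span (M ` {..<j})"
proof
  assume a: "M j \<in> fvs.span (M ` {..<j})"
  have "M ` {..<j} \<subseteq> M ` {..<k} - {M j}"
    using assms(1,3) by (auto simp: inj_on_def)
  then have "M j \<in> fvs.span (M ` {..<k} - {M j})" using a fvs.span_mono by blast
  then have "fvs.dependent (M ` {..<k})" using assms(3) unfolding fvs.dependent_def by auto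
  then show False using assms(2) by simp
qed

lemma W_indep:
  fixes M M' :: "nat \<Rightarrow> nat \<Rightarrow> 'a::field"
  assumes i1: "inj_on M {..<k}" and i2: "fvs.independent (M ` {..<k})"
    and i1': "inj_on M' {..<k}" and i2': "fvs.independent (M' ` {..<k})"
    and int: "fvs.span (M ` {..<k}) \<inter> fvs.span (M' ` {..<k}) = {0}"
    and W: "W = (\<lambda>r. if r < k then M r else M' (r - k))"
  shows "j \<le> 2*k \<Longrightarrow> fvs.independent (W ` {..<j}) \<and> inj_on W {..<j}"
proof (induction j)
  case 0
  then show ?case by (simp add: fvs.independent_empty)
next
  case (Suc j)
  then have IH: "fvs.independent (W ` {..<j})" "inj_on W {..<j}" by auto
  have notin: "W j \<notin> fvs.span (W ` {..<j})"
  proof (cases "j < k")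
    case True
    have "W ` {..<j} = M ` {..<j}" using True W by auto
    then show ?thesis using row_notin[OF i1 i2 True] True W by simp
  next
    case False
    have jk: "j - k < k" using Suc.prems False by auto
    have eqW: "W ` {..<j} = M ` {..<k} \<union> M' ` {..<j-k}"
    proof
      show "W ` {..<j} \<subseteq> M ` {..<k} \<union> M' ` {..<j-k}" using W False by auto
      show "M ` {..<k} \<union> M' ` {..<j-k} \<subseteq> W ` {..<j}"
      proof
        fix x assume "x \<in> M ` {..<k} \<union> M' ` {..<j-k}"
        then show "x \<in> W ` {..<j}"
        proof
          assume "x \<in> M ` {..<k}" then obtain r where "r < k" "x = M r" by auto
          then show ?thesis using W False by (auto intro!: image_eqI[of _ _ r])
        next
          assume "x \<in> M' ` {..<j-k}" then obtain r where "r < j-k" "x = M' r" by auto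
          then show ?thesis using W False by (auto intro!: image_eqI[of _ _ "r+k"])
        qed
      qed
    qed
    have Wj: "W j = M' (j-k)" using W False by simp
    show ?thesis
    proof
      assume "W j \<in> fvs.span (W ` {..<j})"
      then have "W j \<in> {x + y | x y. x \<in> fvs.span (M ` {..<k}) \<and> y \<in> fvs.span (M' ` {..<j-k})}"
        unfolding eqW fvs.span_Un .
      then obtain x y where xy: "W j = x + y" "x \<in> fvs.span (M ` {..<k})" "y \<in> fvs.span (M' ` {..<j-k})"
        by blast
      have sub: "fvs.span (M' ` {..<j-k}) \<subseteq> fvs.span (M' ` {..<k})"
        by (rule fvs.span_mono) (use jk in auto)
      have "W j \<in> fvs.span (M' ` {..<k})" using Wj jk by (auto intro: fvs.span_base)
      moreover have "y \<in> fvs.span (M' ` {..<k})" using sub xy(3) by (rule subsetD)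
      ultimately have "W j - y \<in> fvs.span (M' ` {..<k})" by (rule fvs.span_diff)
      moreover have "W j - y = x" using xy(1) by simp
      ultimately have "x \<in> fvs.span (M ` {..<k}) \<inter> fvs.span (M' ` {..<k})" using xy(2) by simp
      then have "x \<in> {0}" by (simp only: int)
      then have "x = 0" by simp
      then have "M' (j-k) \<in> fvs.span (M' ` {..<j-k})" using xy Wj by simp
      then show False using row_notin[OF i1' i2' jk] by simp
    qed
  qed
  have "W ` {..<Suc j} = insert (W j) (W ` {..<j})" by (simp add: lessThan_Suc)
  moreover have "W j \<notin> W ` {..<j}"
  proof
    assume "W j \<in> W ` {..<j}"
    then have "W j \<in> fvs.span (W ` {..<j})" by (rule fvs.span_base)
    with notin show False by contradiction
  qed
  moreover have "fvs.independent (insert (W j) (W ` {..<j}))"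
    by (rule fvs.independent_insertI[OF notin IH(1)])
  moreover have "inj_on W (insert j {..<j})"
    using IH(2) \<open>W j \<notin> W ` {..<j}\<close> by simp
  ultimately show ?case by (simp only: lessThan_Suc) simp
qed

theorem lemma4p12:
  fixes k :: nat
    and S :: "nat \<Rightarrow> nat \<Rightarrow> nat \<Rightarrow> 'a::{finite,field}"
    and F X :: "(nat \<Rightarrow> 'a) set list"
  assumes "k \<ge> 2"
    and "is_spread_gen k S"
    and "F \<in> spread_flag_code k S"
    and "length X = 2*k - 1"
    and "\<forall>i\<in>{1..2*k-1}. fsubspace (X ! (i-1)) \<and> X ! (i-1) \<subseteq> F ! (i-1)"
    and "\<forall>i\<in>{1..k}. X ! (i-1) = {0}"
    and "(\<Sum>i=1..2*k-1. subspace_dist (F ! (i-1)) (X ! (i-1))) \<le> k^2 - 1"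
  shows "\<exists>i. k < i \<and> i < 2*k \<and> fdim (X ! (i-1)) > 2*(i-k)"
proof (rule ccontr)
  assume neg: "\<not> ?thesis"
  let ?N = "card (UNIV :: 'a set)^k + 1"
  from assms(3) obtain i where i: "i \<in> {1..?N}"
    and F: "F = map (\<lambda>j. rowspace_prefix (Wmat k S i) j) [1..<2*k]"
    unfolding spread_flag_code_def by blast
  define i' where "i' = (if i = ?N then 1 else i + 1)"
  have "card (UNIV :: 'a set) > 0" by (simp add: finite_UNIV_card_ge_0)
  then have "card (UNIV :: 'a set)^k \<ge> 1" by simp
  then have i': "i' \<in> {1..?N}" "i' \<noteq> i" using i by (auto simp: i'_def)
  have spa: "\<forall>m\<in>{1..?N}. (\<forall>r<k. S m r \<in> ambient (2*k)) \<and> fdim (rowspace_prefix (S m) k) = k"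
    using assms(2) unfolding is_spread_gen_def by (rule conjunct1)
  have spb: "\<forall>m\<in>{1..?N}. \<forall>m'\<in>{1..?N}. m \<noteq> m' \<longrightarrow>
          rowspace_prefix (S m) k \<inter> rowspace_prefix (S m') k = {0}"
    using assms(2) unfolding is_spread_gen_def by (rule conjunct2)
  have sp: "fdim (rowspace_prefix (S m) k) = k" if "m \<in> {1..?N}" for m
    using bspec[OF spa that] by (rule conjunct2)
  have r1: "inj_on (S i) {..<k} \<and> fvs.independent (S i ` {..<k})"
    using rows_indep[OF sp[OF i]] .
  have r2: "inj_on (S i') {..<k} \<and> fvs.independent (S i' ` {..<k})"
    using rows_indep[OF sp[OF i'(1)]] .
  have "rowspace_prefix (S i) k \<inter> rowspace_prefix (S i') k = {0}"
    using bspec[OF bspec[OF spb i] i'(1)] i'(2) by simp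
  then have int: "fvs.span (S i ` {..<k}) \<inter> fvs.span (S i' ` {..<k}) = {0}"
    unfolding rowspace_eq .
  define W where "W = Wmat k S i"
  have Weq: "W = (\<lambda>r. if r < k then S i r else S i' (r - k))"
    by (auto simp: W_def Wmat_def i'_def fun_eq_iff)
  have Wind: "fvs.independent (W ` {..<j}) \<and> inj_on W {..<j}" if "j \<le> 2*k" for j
    using W_indep[of "S i" k "S i'" W j] r1 r2 int Weq that by blast
  have Fj: "F ! (j-1) = fvs.span (W ` {..<j})" if "j \<in> {1..2*k-1}" for j
  proof -
    have jl: "1 \<le> j" "j \<le> 2*k-1" using that by auto
    have len: "j - 1 < length [1..<2*k]" unfolding length_upt using jl by arith
    have "F ! (j-1) = rowspace_prefix W ([1..<2*k] ! (j-1))" unfolding F W_def by (rule nth_map[OF len])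
    also have "[1..<2*k] ! (j-1) = j" using that by (subst nth_upt) auto
    finally show ?thesis unfolding rowspace_eq .
  qed
  have dimF: "fvs.dim (fvs.span (W ` {..<j})) = j" if "j \<le> 2*k" for j
  proof -
    have "fvs.dim (fvs.span (W ` {..<j})) = card (W ` {..<j})"
      using Wind[OF that] fvs.dim_span_eq_card_independent by blast
    also have "\<dots> = j" using Wind[OF that] by (simp add: card_image)
    finally show ?thesis .
  qed
  have dj: "subspace_dist (F!(j-1)) (X!(j-1)) = j - fdim (X!(j-1))" if j: "j \<in> {1..2*k-1}" for j
  proof -
    have sub: "X!(j-1) \<subseteq> F!(j-1)" using assms(5) j by blast
    have "fspan (F!(j-1) \<union> X!(j-1)) = fvs.span (fvs.span (W ` {..<j}))"
      using sub Fj[OF j] unfolding fspan_def by (simp add: Un_absorb2)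
    moreover have "j \<le> 2*k" using j by auto
    ultimately have "fdim (fspan (F!(j-1) \<union> X!(j-1))) = j"
      using dimF[of j] j unfolding fdim_def fvs.span_span by (simp add: fdim_def)
    moreover have "F!(j-1) \<inter> X!(j-1) = X!(j-1)" using sub by blast
    ultimately show ?thesis unfolding subspace_dist_def by simp
  qed
  have bound: "fdim (X!(j-1)) \<le> (if j \<le> k then 0 else 2*(j-k))" if j: "j \<in> {1..2*k-1}" for j
  proof (cases "j \<le> k")
    case True
    then have "j \<in> {1..k}" using j by simp
    then have "X!(j-1) = {0}" using assms(6) by blast
    moreover have "fvs.dim {0::nat \<Rightarrow> 'a} \<le> card ({}::(nat \<Rightarrow> 'a) set)"
      by (rule fvs.dim_le_card) auto
    ultimately show ?thesis using True unfolding fdim_def by simp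
  next
    case False
    have "k < j" "j < 2*k" using False j by auto
    then have "\<not> 2*(j-k) < fdim (X ! (j-1))" using neg by blast
    then show ?thesis using False by simp
  qed
  have "(\<Sum>j=1..2*k-1. j - (if j \<le> k then 0 else 2*(j-k)))
      \<le> (\<Sum>j=1..2*k-1. subspace_dist (F!(j-1)) (X!(j-1)))"
  proof (rule sum_mono)
    fix j assume j: "j \<in> {1..2*k-1}"
    show "j - (if j \<le> k then 0 else 2*(j-k)) \<le> subspace_dist (F!(j-1)) (X!(j-1))"
      using dj[OF j] bound[OF j] by (simp split: if_splits; linarith)
  qed
  moreover have "(\<Sum>j=1..2*k-1. j - (if j \<le> k then 0 else 2*(j-k))) = k^2"
    using arith_sum[of k] assms(1) by simp
  ultimately have "k^2 \<le> (\<Sum>j=1..2*k-1. subspace_dist (F!(j-1)) (X!(j-1)))" by simp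
  then have "k^2 \<le> k^2 - 1" using assms(7) by (rule order_trans)
  moreover have "k^2 > 0" using assms(1) by simp
  ultimately show False by linarith
qed

end
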